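(* Let $\gamma>0$, $a\in\mathbb{C}$ and $f\in\mathcal{H}_\gamma$. Then $$\mathcal{W}^{\gamma,a}_{RBF}f(z)=\exp\left(\frac{a^2-|a|^2}{\gamma^2}+\frac{2z(\overline a-a)}{\gamma^2}\right)f(z-a),\quad z\in\mathbb{C}.$$ Moreover, $\mathcal{W}^{\gamma,a}_{RBF}$ coincides with the translation operator $T_a[f](z):=f(z-a)$ (i.e. $\mathcal{W}^{\gamma,a}_{RBF}f=T_af$ for all $f\in\mathcal{H}_\gamma$) if and only if $a\in\mathbb{R}$.
   Context: For $\alpha>0$, $\mathcal{F}_\alpha$ is the Fock space of entire $f$ with $\frac{\alpha}{\pi}\int_{\mathbb{C}}|f|^2e^{-\alpha|z|^2}dA<\infty$, and $\mathcal{W}^\alpha_af(z)=f(z-a)\exp\left(\alpha\left(z\overline a-\frac{|a|^2}{2}\right)\right)$ is the Weyl operator on $\mathcal{F}_\alpha$. $\mathcal{H}_\gamma$ is the Hilbert space of entire $f$ with $\frac{2}{\pi\gamma^2}\int_{\mathbb{C}}|f(z)|^2\exp\left(\frac{(z-\overline z)^2}{\gamma^2}\right)dA(z)<\infty$. With $\mathcal{M}^{\gamma^2}_{RBF}f=e^{z^2/\gamma^2}f$ and $\mathcal{M}^{-\gamma^2}_{RBF}g=e^{-z^2/\gamma^2}g$, the RBF-Weyl operator is $\mathcal{W}^{\gamma,a}_{RBF}:=\mathcal{M}^{-\gamma^2}_{RBF}\circ\mathcal{W}^{2/\gamma^2}_a\circ\mathcal{M}^{\gamma^2}_{RBF}$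 on $\mathcal{H}_\gamma$. *)

theory Defs
  imports "HOL-Analysis.Analysis"
begin

definition weyl :: "real \<Rightarrow> complex \<Rightarrow> (complex \<Rightarrow> complex) \<Rightarrow> (complex \<Rightarrow> complex)" where
  "weyl \<alpha> a f = (\<lambda>z. f (z - a) * exp (of_real \<alpha> * (z * cnj a - of_real ((cmod a)\<^sup>2 / 2))))"

text \<open>The space H_gamma: entire functions with finite weighted L2 norm.
  The weight exp((z - cnj z)^2 / gamma^2) is real-valued; we take its real part.\<close>
definition H_space :: "real \<Rightarrow> (complex \<Rightarrow> complex) set" where
  "H_space \<gamma> = {f. f holomorphic_on UNIV \<and>
     integrable lborel (\<lambda>z. 2 / (pi * \<gamma>\<^sup>2) * (cmod (f z))\<^sup>2 * exp (Re ((z - cnj z)\<^sup>2) / \<gamma>\<^sup>2))}"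

definition M_RBF :: "real \<Rightarrow> (complex \<Rightarrow> complex) \<Rightarrow> (complex \<Rightarrow> complex)" where
  "M_RBF \<gamma> f = (\<lambda>z. exp (z\<^sup>2 / of_real (\<gamma>\<^sup>2)) * f z)"

definition M_RBF_inv :: "real \<Rightarrow> (complex \<Rightarrow> complex) \<Rightarrow> (complex \<Rightarrow> complex)" where
  "M_RBF_inv \<gamma> g = (\<lambda>z. exp (- (z\<^sup>2) / of_real (\<gamma>\<^sup>2)) * g z)"

definition RBF_weyl :: "real \<Rightarrow> complex \<Rightarrow> (complex \<Rightarrow> complex) \<Rightarrow> (complex \<Rightarrow> complex)" where
  "RBF_weyl \<gamma> a = M_RBF_inv \<gamma> \<circ> weyl (2 / \<gamma>\<^sup>2) a \<circ> M_RBF \<gamma>"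

definition translation :: "complex \<Rightarrow> (complex \<Rightarrow> complex) \<Rightarrow> (complex \<Rightarrow> complex)" where
  "translation a f = (\<lambda>z. f (z - a))"

end

theory Submission
  imports Defs "HOL-Probability.Probability"
begin

lemma gauss1:
  fixes \<gamma> :: real assumes g: "\<gamma> > 0"
  shows "integrable lborel (\<lambda>x::real. exp (- 2 * x\<^sup>2 / \<gamma>\<^sup>2))"
proof -
  define C where "C = 1 / sqrt (2 * pi * (\<gamma>/2)\<^sup>2)"
  have C: "C > 0" using g by (simp add: C_def)
  have "integrable lborel (\<lambda>x. (1/C) * normal_density 0 (\<gamma>/2) x)"
    using g by (intro integrable_mult_right integrable_normal_density) auto
  also have "(\<lambda>x. (1/C) * normal_density 0 (\<gamma>/2) x) = (\<lambda>x::real. exp (- 2 * x\<^sup>2 / \<gamma>\<^sup>2))"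
  proof
    fix x :: real
    have "- (x - 0)\<^sup>2 / (2 * (\<gamma>/2)\<^sup>2) = - 2 * x\<^sup>2 / \<gamma>\<^sup>2"
      using g by (simp add: field_simps power2_eq_square)
    then show "(1/C) * normal_density 0 (\<gamma>/2) x = exp (- 2 * x\<^sup>2 / \<gamma>\<^sup>2)"
      unfolding normal_density_def C_def[symmetric] using C by simp
  qed
  finally show ?thesis .
qed

lemma gauss_nn:
  fixes \<gamma> :: real assumes g: "\<gamma> > 0"
  shows "(\<integral>\<^sup>+x. ennreal (exp (- 2 * x\<^sup>2 / \<gamma>\<^sup>2)) \<partial>lborel) < \<infinity>"
  using gauss1[OF g] unfolding integrable_iff_bounded by simp

lemma gauss2:
  fixes \<gamma> :: real assumes g: "\<gamma> > 0"
  shows "integrable lborel (\<lambda>z::complex. exp (- 2 * (Re z)\<^sup>2 / \<gamma>\<^sup>2) * exp (- 2 * (Im z)\<^sup>2 / \<gamma>\<^sup>2))"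
proof (rule integrableI_nonneg)
  show "(\<lambda>z::complex. exp (- 2 * (Re z)\<^sup>2 / \<gamma>\<^sup>2) * exp (- 2 * (Im z)\<^sup>2 / \<gamma>\<^sup>2)) \<in> borel_measurable lborel"
    by measurable
  show "AE x in lborel. 0 \<le> exp (- 2 * (Re x)\<^sup>2 / \<gamma>\<^sup>2) * exp (- 2 * (Im x)\<^sup>2 / \<gamma>\<^sup>2)" by simp
  let ?g = "\<lambda>x::real. ennreal (exp (- 2 * x\<^sup>2 / \<gamma>\<^sup>2))"
  have eq: "(\<lambda>z::complex. ennreal (exp (- 2 * (Re z)\<^sup>2 / \<gamma>\<^sup>2) * exp (- 2 * (Im z)\<^sup>2 / \<gamma>\<^sup>2)))
        = (\<lambda>z. \<Prod>b\<in>Basis. (\<lambda>b. ?g) b (z \<bullet> b))"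
    by (auto simp: Basis_complex_def ennreal_mult inner_complex_def)
  have "(\<integral>\<^sup>+z. (\<Prod>b\<in>(Basis::complex set). (\<lambda>b. ?g) b (z \<bullet> b)) \<partial>lborel) = (\<Prod>b\<in>(Basis::complex set). (\<integral>\<^sup>+x. ?g x \<partial>lborel))"
    by (rule nn_integral_lborel_prod) auto
  also have "\<dots> < \<infinity>" using gauss_nn[OF g]
    by (simp add: Basis_complex_def ennreal_mult_less_top power2_eq_square)
  finally show "(\<integral>\<^sup>+z. ennreal (exp (- 2 * (Re z)\<^sup>2 / \<gamma>\<^sup>2) * exp (- 2 * (Im z)\<^sup>2 / \<gamma>\<^sup>2)) \<partial>lborel) < \<infinity>"
    by (subst eq) assumption
qed


lemma neg_aux: "- ((a * a - b * b) / (g * g)) = ((b * b - a * a) / (g * g::real))"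
  by (metis minus_diff_eq minus_divide_left)

lemma f0_in:
  fixes \<gamma> :: real assumes g: "\<gamma> > 0"
  shows "(\<lambda>z. exp (- (z\<^sup>2) / of_real (\<gamma>\<^sup>2))) \<in> H_space \<gamma>"
proof -
  have eq: "(\<lambda>z. 2 / (pi * \<gamma>\<^sup>2) * (cmod (exp (- (z\<^sup>2) / of_real (\<gamma>\<^sup>2))))\<^sup>2 * exp (Re ((z - cnj z)\<^sup>2) / \<gamma>\<^sup>2))
     = (\<lambda>z::complex. 2 / (pi * \<gamma>\<^sup>2) * (exp (- 2 * (Re z)\<^sup>2 / \<gamma>\<^sup>2) * exp (- 2 * (Im z)\<^sup>2 / \<gamma>\<^sup>2)))"
  proof
    fix z :: complex
    have r: "Re (- (z\<^sup>2) / of_real (\<gamma>\<^sup>2)) = - ((Re z)\<^sup>2 - (Im z)\<^sup>2) / \<gamma>\<^sup>2"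
      by (simp only: Re_divide_of_real uminus_complex.sel Re_power2)
    have r2: "Re ((z - cnj z)\<^sup>2) = - 4 * (Im z)\<^sup>2"
      by (simp add: power2_eq_square)
    have "(cmod (exp (- (z\<^sup>2) / of_real (\<gamma>\<^sup>2))))\<^sup>2 * exp (Re ((z - cnj z)\<^sup>2) / \<gamma>\<^sup>2)
        = exp (2 * (- ((Re z)\<^sup>2 - (Im z)\<^sup>2) / \<gamma>\<^sup>2) + - 4 * (Im z)\<^sup>2 / \<gamma>\<^sup>2)"
      unfolding norm_exp_eq_Re r r2 mult_2 exp_add power2_eq_square using neg_aux by simp
    also have "\<dots> = exp (- 2 * (Re z)\<^sup>2 / \<gamma>\<^sup>2) * exp (- 2 * (Im z)\<^sup>2 / \<gamma>\<^sup>2)"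
      using g by (simp add: exp_add[symmetric] field_simps)
    finally show "2 / (pi * \<gamma>\<^sup>2) * (cmod (exp (- (z\<^sup>2) / of_real (\<gamma>\<^sup>2))))\<^sup>2 * exp (Re ((z - cnj z)\<^sup>2) / \<gamma>\<^sup>2)
      = 2 / (pi * \<gamma>\<^sup>2) * (exp (- 2 * (Re z)\<^sup>2 / \<gamma>\<^sup>2) * exp (- 2 * (Im z)\<^sup>2 / \<gamma>\<^sup>2))"
      by simp
  qed
  have "(\<lambda>z. exp (- (z\<^sup>2) / of_real (\<gamma>\<^sup>2))) holomorphic_on UNIV"
    by (intro holomorphic_intros) auto
  moreover have "integrable lborel (\<lambda>z::complex. 2 / (pi * \<gamma>\<^sup>2) * (exp (- 2 * (Re z)\<^sup>2 / \<gamma>\<^sup>2) * exp (- 2 * (Im z)\<^sup>2 / \<gamma>\<^sup>2)))"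
    by (intro integrable_mult_right gauss2[OF g])
  ultimately show ?thesis unfolding H_space_def mem_Collect_eq eq by blast
qed

lemma formula:
  "RBF_weyl \<gamma> a f z =
            exp ((a\<^sup>2 - of_real ((cmod a)\<^sup>2)) / of_real (\<gamma>\<^sup>2)
                 + 2 * z * (cnj a - a) / of_real (\<gamma>\<^sup>2)) * f (z - a)"
proof -
  have "RBF_weyl \<gamma> a f z = exp (- (z\<^sup>2) / of_real (\<gamma>\<^sup>2)) * (exp ((z-a)\<^sup>2 / of_real (\<gamma>\<^sup>2)) * f (z - a)
      * exp (of_real (2 / \<gamma>\<^sup>2) * (z * cnj a - of_real ((cmod a)\<^sup>2 / 2))))"
    by (simp add: RBF_weyl_def M_RBF_def M_RBF_inv_def weyl_def)
  also have "\<dots> = exp (- (z\<^sup>2) / of_real (\<gamma>\<^sup>2) + (z-a)\<^sup>2 / of_real (\<gamma>\<^sup>2)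
      + of_real (2 / \<gamma>\<^sup>2) * (z * cnj a - of_real ((cmod a)\<^sup>2 / 2))) * f (z - a)"
    unfolding exp_add by (simp add: mult_ac)
  also have "- (z\<^sup>2) / of_real (\<gamma>\<^sup>2) + (z-a)\<^sup>2 / of_real (\<gamma>\<^sup>2)
      + of_real (2 / \<gamma>\<^sup>2) * (z * cnj a - of_real ((cmod a)\<^sup>2 / 2))
     = (a\<^sup>2 - of_real ((cmod a)\<^sup>2)) / of_real (\<gamma>\<^sup>2)
                 + 2 * z * (cnj a - a) / of_real (\<gamma>\<^sup>2)"
    by (simp add: power2_eq_square diff_divide_distrib add_divide_distrib algebra_simps)
  finally show ?thesis .
qed

theorem mainTheorem17:
  fixes \<gamma> :: real and a :: complex
  assumes "\<gamma> > 0"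
  shows "(\<forall>f \<in> H_space \<gamma>. \<forall>z. RBF_weyl \<gamma> a f z =
            exp ((a\<^sup>2 - of_real ((cmod a)\<^sup>2)) / of_real (\<gamma>\<^sup>2)
                 + 2 * z * (cnj a - a) / of_real (\<gamma>\<^sup>2)) * f (z - a))
       \<and> ((\<forall>f \<in> H_space \<gamma>. RBF_weyl \<gamma> a f = translation a f) \<longleftrightarrow> a \<in> \<real>)"
proof (intro conjI iffI ballI allI)
  show "RBF_weyl \<gamma> a f z =
            exp ((a\<^sup>2 - of_real ((cmod a)\<^sup>2)) / of_real (\<gamma>\<^sup>2)
                 + 2 * z * (cnj a - a) / of_real (\<gamma>\<^sup>2)) * f (z - a)" for f z
    by (rule formula)
next
  fix f assume "a \<in> \<real>"
  then obtain r where r: "a = of_real r" by (auto elim: Reals_cases)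
  have "(a\<^sup>2 - of_real ((cmod a)\<^sup>2)) / of_real (\<gamma>\<^sup>2) + 2 * z * (cnj a - a) / of_real (\<gamma>\<^sup>2) = 0" for z
    by (simp add: r)
  then show "RBF_weyl \<gamma> a f = translation a f"
    by (simp add: fun_eq_iff formula translation_def)
next
  assume H: "\<forall>f \<in> H_space \<gamma>. RBF_weyl \<gamma> a f = translation a f"
  define f0 where "f0 = (\<lambda>z::complex. exp (- (z\<^sup>2) / of_real (\<gamma>\<^sup>2)))"
  have "f0 \<in> H_space \<gamma>" unfolding f0_def by (rule f0_in[OF assms])
  with H have eq: "RBF_weyl \<gamma> a f0 = translation a f0" by blast
  define E where "E = (\<lambda>z. (a\<^sup>2 - of_real ((cmod a)\<^sup>2)) / of_real (\<gamma>\<^sup>2) + 2 * z * (cnj a - a) / of_real (\<gamma>\<^sup>2))"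
  have E1: "exp (E z) = 1" for z
  proof -
    have "exp (E z) * f0 (z - a) = f0 (z - a)"
      using fun_cong[OF eq, of z] by (simp add: formula translation_def E_def)
    moreover have "f0 (z - a) \<noteq> 0" by (simp add: f0_def)
    ultimately show ?thesis by simp
  qed
  show "a \<in> \<real>"
  proof (rule ccontr)
    assume na: "a \<notin> \<real>"
    define d where "d = 2 * (cnj a - a) / of_real (\<gamma>\<^sup>2)"
    have "cnj a \<noteq> a" using na Reals_cnj_iff by metis
    then have d0: "d \<noteq> 0" using assms by (simp add: d_def)
    have Ez: "E z = E 0 + z * d" for z by (simp add: E_def d_def algebra_simps)
    define w where "w = of_real pi * \<i> / d"
    have "E w = E 0 + of_real pi * \<i>"
      using d0 Ez[of w] by (simp add: w_def)
    then have "exp (E w) = exp (E 0) * exp (of_real pi * \<i>)"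
      by (simp add: exp_add)
    then have "exp (E w) = - 1" using E1[of 0] by simp
    with E1[of w] show False by simp
  qed
qed

end
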